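(* Let $p\ge3$ and let $\{(a_j,b_j)\}_{j\ge1}$ be a $p$-periodic sequence with $a_j>0$, $b_j\in\mathbb{R}$. Let $m$ be the discrete $m$-function with continued fraction coefficients $\{(a_j,b_j)\}_{j\ge1}$, and let $m^-$ be the discrete $m$-function whose continued fraction coefficients are purely periodic with one period given by \[ (a_{p-1},b_p),(a_{p-2},b_{p-1}),\ldots,(a_1,b_2),(a_p,b_1). \] For $N\in\mathbb{N}$ let $m_N$ denote the discrete $m$-function with continued fraction coefficients $\{(a_n,b_n)\}_{n\ge N+1}$. Then for $\ell\in\{1,\ldots,p-2\}$, the sequence $\{(a_j,b_j)\}$ is doubly palindromic with period $p$ and first length $\ell$ if and only if $m^-=m_{\ell+1}$.
   Context: A discrete $m$-function is a function $m(z)=\int\frac{d\rho(x)}{x-z}$ on $\mathbb{C}_+=\{z:\operatorname{Im} z>0\}$, where $\rho$ is a probability measure on $\mathbb{R}$ with compact support. Such $m$ has a unique continued fraction expansion \[ m(z)=\cfrac{1}{b_1-z-\cfrac{a_1^2}{b_2-z-\cfrac{a_2^2}{b_3-z-\cdots}}} \] valid on $\mathbb{C}_+$, with bounded sequences $a_n>0$, $b_n\in\mathbb{R}$; the pairs $\{(a_n,b_n)\}_{n\ge1}$ are its continued fraction coefficients, and conversely every bounded such sequence is the coefficient sequence of a unique discrete $m$-function. Doubly palindromic: a $p$-periodic sequence $\{(a_j,b_j)\}$ is doubly palindromic with period $p$ and first length $\ell$ ($1\le\ell\le p-2$) if the word $a_1a_2\cdots a_p$ is the concatenation of a palindrome of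 length $\ell$ and a palindrome of length $p-\ell$, and the word $b_1b_2\cdots b_p$ is the concatenation of a palindrome of length $\ell+1$ and a palindrome of length $p-\ell-1$. *)

theory Defs
  imports "HOL-Analysis.Analysis"
begin

text \<open>Sequences are indexed from 1: a j, b j for j \<ge> 1 (index 0 unused).\<close>

fun cf_trunc :: "(nat \<Rightarrow> real) \<Rightarrow> (nat \<Rightarrow> real) \<Rightarrow> nat \<Rightarrow> nat \<Rightarrow> complex \<Rightarrow> complex" where
  "cf_trunc a b 0 k z = 0"
| "cf_trunc a b (Suc n) k z =
     1 / (complex_of_real (b k) - z - complex_of_real ((a k)^2) * cf_trunc a b n (Suc k) z)"

text \<open>The discrete m-function whose continued fraction coefficients are {(a_j,b_j)}_{j\<ge>k},
  i.e. the value of the (convergent, for bounded coefficients) continued fraction on C_+.\<close>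
definition mfun :: "(nat \<Rightarrow> real) \<Rightarrow> (nat \<Rightarrow> real) \<Rightarrow> nat \<Rightarrow> complex \<Rightarrow> complex" where
  "mfun a b k z = lim (\<lambda>n. cf_trunc a b n k z)"

definition periodic_seq :: "(nat \<Rightarrow> real) \<Rightarrow> nat \<Rightarrow> bool" where
  "periodic_seq f p \<longleftrightarrow> (\<forall>j\<ge>1. f (j + p) = f j)"

definition palindrome :: "'a list \<Rightarrow> bool" where
  "palindrome w \<longleftrightarrow> rev w = w"

definition word :: "(nat \<Rightarrow> real) \<Rightarrow> nat \<Rightarrow> real list" where
  "word f p = map f [1..<p+1]"

definition doubly_palindromic ::
  "(nat \<Rightarrow> real) \<Rightarrow> (nat \<Rightarrow> real) \<Rightarrow> nat \<Rightarrow> nat \<Rightarrow> bool" where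
  "doubly_palindromic a b p l \<longleftrightarrow>
     periodic_seq a p \<and> periodic_seq b p \<and> 1 \<le> l \<and> l + 2 \<le> p \<and>
     palindrome (take l (word a p)) \<and> palindrome (drop l (word a p)) \<and>
     palindrome (take (l+1) (word b p)) \<and> palindrome (drop (l+1) (word b p))"

text \<open>Reflected coefficients: purely periodic with one period
  (a_(p-1),b_p),(a_(p-2),b_(p-1)),...,(a_1,b_2),(a_p,b_1).\<close>
definition refl_a :: "(nat \<Rightarrow> real) \<Rightarrow> nat \<Rightarrow> nat \<Rightarrow> real" where
  "refl_a a p j = (let i = (j - 1) mod p in if i = p - 1 then a p else a (p - 1 - i))"

definition refl_b :: "(nat \<Rightarrow> real) \<Rightarrow> nat \<Rightarrow> nat \<Rightarrow> real" where
  "refl_b b p j = b (p - (j - 1) mod p)"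

end

theory Submission imports Defs begin

lemma den_bound:
  assumes A: "(a::real)^2 \<le> KA" and y: "y > 0" "4*KA \<le> y^2" and w: "cmod w \<le> 2/y"
  shows "cmod (complex_of_real bb - \<i>*complex_of_real y - complex_of_real (a^2) * w) \<ge> y/2"
proof -
  have "\<bar>Im w\<bar> \<le> 2/y" using abs_Im_le_cmod[of w] w by linarith
  have A0: "0 \<le> KA" using A by (smt (verit) zero_le_power2)
  have "a^2 * \<bar>Im w\<bar> \<le> KA * (2/y)"
    by (rule mult_mono) (use A \<open>\<bar>Im w\<bar> \<le> 2/y\<close> A0 in auto)
  also have "KA * (2/y) \<le> y/2" using y by (simp add: field_simps power2_eq_square)
  finally have h: "a^2 * \<bar>Im w\<bar> \<le> y/2" .
  have "Im (complex_of_real bb - \<i>*complex_of_real y - complex_of_real (a^2) * w) = - y - a^2 * Im w"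
    by simp
  moreover have "\<bar>- y - a^2 * Im w\<bar> \<ge> y/2"
  proof -
    have "\<bar>a^2 * Im w\<bar> \<le> y/2" using h by (simp add: abs_mult)
    thus ?thesis using y by linarith
  qed
  ultimately show ?thesis
    by (metis abs_Im_le_cmod order_trans)
qed

lemma cf_bound:
  assumes A: "\<And>j. (a j)^2 \<le> KA" and y: "y > 0" "4*KA \<le> y^2"
  shows "cmod (cf_trunc a b n k (\<i> * complex_of_real y)) \<le> 2/y"
proof (induction n arbitrary: k)
  case 0 then show ?case using y by simp
next
  case (Suc n)
  let ?D = "complex_of_real (b k) - \<i>*complex_of_real y - complex_of_real ((a k)^2) * cf_trunc a b n (Suc k) (\<i> * complex_of_real y)"
  have d: "cmod ?D \<ge> y/2" by (rule den_bound[OF A y Suc.IH])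
  have "cmod (1 / ?D) = 1 / cmod ?D" by (simp add: norm_divide)
  also have "\<dots> \<le> 1/(y/2)"
  proof -
    have "cmod ?D > 0" using d y by linarith
    thus ?thesis using d y by (intro divide_left_mono) auto
  qed
  finally show ?case by simp
qed

lemma contr:
  assumes A: "(a::real)^2 \<le> KA" and y: "y > 0" "8*KA \<le> y^2"
    and u: "cmod u \<le> 2/y" and v: "cmod v \<le> 2/y"
  shows "cmod (1/(complex_of_real bb - \<i>*complex_of_real y - complex_of_real (a^2) * u)
     - 1/(complex_of_real bb - \<i>*complex_of_real y - complex_of_real (a^2) * v)) \<le> cmod (u - v) / 2"
proof -
  define Du where "Du = complex_of_real bb - \<i>*complex_of_real y - complex_of_real (a^2) * u"
  define Dv where "Dv = complex_of_real bb - \<i>*complex_of_real y - complex_of_real (a^2) * v"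
  have A0: "0 \<le> KA" using A by (smt (verit) zero_le_power2)
  have y4: "4*KA \<le> y^2" using y A0 by linarith
  have du: "cmod Du \<ge> y/2" unfolding Du_def by (rule den_bound[OF A y(1) y4 u])
  have dv: "cmod Dv \<ge> y/2" unfolding Dv_def by (rule den_bound[OF A y(1) y4 v])
  have nz: "Du \<noteq> 0" "Dv \<noteq> 0" using du dv y by auto
  have "1/Du - 1/Dv = (Dv - Du)/(Du*Dv)" using nz by (simp add: field_simps)
  also have "Dv - Du = complex_of_real (a^2) * (u - v)" unfolding Du_def Dv_def by (simp add: algebra_simps)
  finally have e: "1/Du - 1/Dv = complex_of_real (a^2) * (u - v)/(Du*Dv)" .
  have "cmod (1/Du - 1/Dv) = a^2 * cmod (u - v) / (cmod Du * cmod Dv)"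
    unfolding e by (simp add: norm_divide norm_mult del: of_real_power)
  also have "\<dots> \<le> KA * cmod (u - v) / ((y/2) * (y/2))"
  proof -
    have p: "cmod Du * cmod Dv \<ge> (y/2) * (y/2)" by (rule mult_mono) (use du dv y in auto)
    have "a^2 * cmod (u - v) / (cmod Du * cmod Dv) \<le> KA * cmod (u - v) / (cmod Du * cmod Dv)"
      by (intro divide_right_mono mult_right_mono) (use A in auto)
    also have "\<dots> \<le> KA * cmod (u - v) / ((y/2) * (y/2))"
      proof (rule divide_left_mono)
      show "0 < cmod Du * cmod Dv * ((y/2) * (y/2))" using nz y by auto
    qed (use p A0 in auto)
    finally show ?thesis .
  qed
  also have "\<dots> \<le> cmod (u - v) / 2"
  proof -
    have "KA * cmod (u - v) / ((y/2) * (y/2)) = (4*KA/y^2) * cmod (u-v)" by (simp add: field_simps power2_eq_square)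
    also have "\<dots> \<le> (1/2) * cmod (u - v)"
      apply (rule mult_right_mono) using y by (auto simp: field_simps)
    finally show ?thesis by simp
  qed
  finally show ?thesis unfolding Du_def Dv_def .
qed

lemma cf_cauchy:
  assumes A: "\<And>j. (a j)^2 \<le> KA" and y: "y > 0" "8*KA \<le> y^2"
  shows "cmod (cf_trunc a b (n+m) k (\<i> * complex_of_real y) - cf_trunc a b n k (\<i> * complex_of_real y)) \<le> (1/2)^n * (4/y)"
proof (induction n arbitrary: k)
  have A0: "0 \<le> KA" using A[of 0] by (smt (verit) zero_le_power2)
  have y4: "4*KA \<le> y^2" using y A0 by linarith
  case 0
  have "2/y \<le> 4/y" using y by (simp add: divide_right_mono)
  then show ?case using cf_bound[where a=a and KA=KA, OF A y(1) y4, where b=b and n=m and k=k] y by simp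
next
  case (Suc n)
  have A0: "0 \<le> KA" using A[of 0] by (smt (verit) zero_le_power2)
  have y4: "4*KA \<le> y^2" using y A0 by linarith
  have "cmod (cf_trunc a b (Suc n+m) k (\<i> * complex_of_real y) - cf_trunc a b (Suc n) k (\<i> * complex_of_real y))
     \<le> cmod (cf_trunc a b (n+m) (Suc k) (\<i> * complex_of_real y) - cf_trunc a b n (Suc k) (\<i> * complex_of_real y)) / 2"
    using contr[where a="a k" and KA=KA, OF A y cf_bound[where a=a and KA=KA, OF A y(1) y4, where b=b and n="n+m" and k="Suc k"] cf_bound[where a=a and KA=KA, OF A y(1) y4, where b=b and n=n and k="Suc k"], where bb="b k"]
    by simp
  also have "\<dots> \<le> (1/2)^n * (4/y) / 2" using Suc.IH[of "Suc k"] by (simp add: mult.commute)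
  finally show ?case by simp
qed

lemma cf_conv:
  assumes A: "\<And>j. (a j)^2 \<le> KA" and y: "y > 0" "8*KA \<le> y^2"
  shows "(\<lambda>n. cf_trunc a b n k (\<i> * complex_of_real y)) \<longlonglongrightarrow> mfun a b k (\<i> * complex_of_real y)"
proof -
  define X where "X = (\<lambda>n. cf_trunc a b n k (\<i> * complex_of_real y))"
  have "Cauchy X"
  proof (rule CauchyI)
    fix e :: real assume e: "0 < e"
    obtain M where M: "(1/2::real)^M < e*y/4" using real_arch_pow_inv[of "e*y/4" "1/2::real"] e y by auto
    have key: "norm (X n - X m) < e" if "M \<le> m" "m \<le> n" for m n
    proof -
      obtain d where n: "n = m + d" using \<open>m \<le> n\<close> le_Suc_ex by blast
      have "norm (X n - X m) \<le> (1/2)^m * (4/y)" unfolding X_def n by (rule cf_cauchy[OF A y])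
      also have "\<dots> \<le> (1/2)^M * (4/y)"
        by (rule mult_right_mono[OF power_decreasing]) (use that y in auto)
      also have "\<dots> < e" using M y by (simp add: field_simps)
      finally show ?thesis .
    qed
    show "\<exists>M. \<forall>m\<ge>M. \<forall>n\<ge>M. norm (X m - X n) < e"
    proof (intro exI allI impI)
      fix m n assume "M \<le> m" "M \<le> n"
      then show "norm (X m - X n) < e"
        using key[of m n] key[of n m] by (cases "m \<le> n") (auto simp: norm_minus_commute)
    qed
  qed
  then have "convergent X" by (simp add: Cauchy_convergent_iff)
  then show ?thesis unfolding X_def mfun_def by (simp add: convergent_LIMSEQ_iff X_def)
qed

lemma mfun_bound:
  assumes A: "\<And>j. (a j)^2 \<le> KA" and y: "y > 0" "8*KA \<le> y^2"
  shows "cmod (mfun a b k (\<i> * complex_of_real y)) \<le> 2/y"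
proof -
  have A0: "0 \<le> KA" using A[of 0] by (smt (verit) zero_le_power2)
  have y4: "4*KA \<le> y^2" using y A0 by linarith
  show ?thesis
    using tendsto_norm[OF cf_conv[where a=a and KA=KA, OF A y, of b k]]
    by (rule LIMSEQ_le_const2) (use cf_bound[where a=a and KA=KA, OF A y(1) y4] in auto)
qed

lemma mfun_rec:
  assumes A: "\<And>j. (a j)^2 \<le> KA" and y: "y > 0" "8*KA \<le> y^2"
  shows "mfun a b k (\<i> * complex_of_real y) = 1 / (complex_of_real (b k) - \<i> * complex_of_real y
            - complex_of_real ((a k)^2) * mfun a b (Suc k) (\<i> * complex_of_real y))"
proof -
  have A0: "0 \<le> KA" using A[of 0] by (smt (verit) zero_le_power2)
  have y4: "4*KA \<le> y^2" using y A0 by linarith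
  let ?z = "\<i> * complex_of_real y"
  have l1: "(\<lambda>n. cf_trunc a b (Suc n) k ?z) \<longlonglongrightarrow> mfun a b k ?z"
    by (rule LIMSEQ_Suc[OF cf_conv[where a=a and KA=KA, OF A y]])
  have d: "cmod (complex_of_real (b k) - ?z - complex_of_real ((a k)^2) * mfun a b (Suc k) ?z) \<ge> y/2"
    by (rule den_bound[OF A y(1) y4 mfun_bound[where a=a and KA=KA, OF A y]])
  have nz: "complex_of_real (b k) - ?z - complex_of_real ((a k)^2) * mfun a b (Suc k) ?z \<noteq> 0"
    using d y by auto
  have l2: "(\<lambda>n. cf_trunc a b (Suc n) k ?z) \<longlonglongrightarrow> 1 / (complex_of_real (b k) - ?z - complex_of_real ((a k)^2) * mfun a b (Suc k) ?z)"
    unfolding cf_trunc.simps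
    by (intro tendsto_intros cf_conv[where a=a and KA=KA, OF A y] nz)
  show ?thesis using LIMSEQ_unique[OF l1 l2] .
qed

lemma small_zero:
  fixes c K Y :: real assumes Y: "Y > 0" and h: "\<And>y. y \<ge> Y \<Longrightarrow> \<bar>c\<bar> \<le> K/y"
  shows "c = 0"
proof (rule ccontr)
  assume c: "c \<noteq> 0"
  define y where "y = max Y (2*\<bar>K\<bar>/\<bar>c\<bar> + 1)"
  have y0: "y > 0" "y \<ge> Y" using Y unfolding y_def by auto
  have "y > 2*\<bar>K\<bar>/\<bar>c\<bar>" unfolding y_def by auto
  hence "y * \<bar>c\<bar> > 2*\<bar>K\<bar>" using c by (simp add: field_simps)
  moreover have "\<bar>c\<bar> * y \<le> K" using h[OF y0(2)] y0 by (simp add: field_simps)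
  ultimately show False using c by (smt (verit) mult.commute zero_less_abs_iff)
qed

lemma near_m1:
  assumes A: "\<And>j. (a j)^2 \<le> KA" and B: "\<And>j. \<bar>b j\<bar> \<le> KB" and y: "y \<ge> 1" "8*KA \<le> y^2"
  shows "cmod (mfun a b k (\<i> * complex_of_real y) * (\<i> * complex_of_real y) + 1) \<le> (2*KB + 4*KA)/y"
proof -
  have y0: "y > 0" using y by auto
  have A0: "0 \<le> KA" using A[of 0] by (smt (verit) zero_le_power2)
  have y4: "4*KA \<le> y^2" using y A0 by linarith
  let ?z = "\<i> * complex_of_real y"
  define w where "w = mfun a b (Suc k) ?z"
  define D where "D = complex_of_real (b k) - ?z - complex_of_real ((a k)^2) * w"
  have w: "cmod w \<le> 2/y" unfolding w_def by (rule mfun_bound[OF A y0 y(2)])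
  have d: "cmod D \<ge> y/2" unfolding D_def by (rule den_bound[OF A y0 y4 w])
  have nz: "D \<noteq> 0" using d y0 by auto
  have m: "mfun a b k ?z = 1/D" unfolding D_def w_def by (rule mfun_rec[OF A y0 y(2)])
  have "mfun a b k ?z * ?z + 1 = (complex_of_real (b k) - complex_of_real ((a k)^2) * w) / D"
    unfolding m using nz by (simp add: field_simps D_def)
  also have "cmod \<dots> \<le> (KB + KA * (2/y)) / (y/2)"
  proof -
    have "cmod (complex_of_real (b k) - complex_of_real ((a k)^2) * w) \<le> \<bar>b k\<bar> + (a k)^2 * cmod w"
      by (rule order_trans[OF norm_triangle_ineq4]) (simp add: norm_mult del: of_real_power)
    also have "\<dots> \<le> KB + KA * (2/y)"
      by (intro add_mono mult_mono B A w) (use A0 in auto)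
    finally have n: "cmod (complex_of_real (b k) - complex_of_real ((a k)^2) * w) \<le> KB + KA * (2/y)" .
    have "KB \<ge> 0" using B[of 0] by linarith
    then show ?thesis unfolding norm_divide
      by (intro frac_le n d) (use y0 A0 in auto)
  qed
  also have "\<dots> = (2*KB + 4*KA/y)/y" using y0 by (simp add: field_simps)
  also have "\<dots> \<le> (2*KB + 4*KA)/y"
  proof -
    have "4*KA/y \<le> 4*KA" using y A0 by (simp add: field_simps mult_le_cancel_left1)
    thus ?thesis using y0 by (intro divide_right_mono) auto
  qed
  finally show ?thesis .
qed

lemma uniq_step:
  assumes A: "\<And>j. (a j)^2 \<le> KA" and A': "\<And>j. (a' j)^2 \<le> KA"
    and B: "\<And>j. \<bar>b j\<bar> \<le> KB" and B': "\<And>j. \<bar>b' j\<bar> \<le> KB"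
    and P: "\<And>j. a j > 0" and P': "\<And>j. a' j > 0"
    and Y: "Y \<ge> 1" "8*KA \<le> Y^2"
    and eq: "\<And>y. y \<ge> Y \<Longrightarrow> mfun a b k (\<i> * complex_of_real y) = mfun a' b' k' (\<i> * complex_of_real y)"
  shows "a k = a' k' \<and> b k = b' k' \<and>
     (\<forall>y\<ge>Y. mfun a b (Suc k) (\<i> * complex_of_real y) = mfun a' b' (Suc k') (\<i> * complex_of_real y))"
proof -
  have A0: "0 \<le> KA" using A[of 0] by (smt (verit) zero_le_power2)
  have yy: "y \<ge> 1 \<and> 8*KA \<le> y^2" if "y \<ge> Y" for y
  proof -
    have "Y^2 \<le> y^2" using that Y by (intro power_mono) auto
    thus ?thesis using Y that by (intro conjI) linarith+
  qed
  define m1 where "m1 y = mfun a b (Suc k) (\<i> * complex_of_real y)" for y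
  define m1' where "m1' y = mfun a' b' (Suc k') (\<i> * complex_of_real y)" for y
  have DD: "complex_of_real (b k) - complex_of_real ((a k)^2) * m1 y =
            complex_of_real (b' k') - complex_of_real ((a' k')^2) * m1' y" if "y \<ge> Y" for y
  proof -
    have y: "y > 0" "8*KA \<le> y^2" using yy[OF that] by auto
    have y4: "4*KA \<le> y^2" using y A0 by linarith
    let ?z = "\<i> * complex_of_real y"
    have d1: "cmod (complex_of_real (b k) - ?z - complex_of_real ((a k)^2) * m1 y) \<ge> y/2"
      unfolding m1_def by (rule den_bound[OF A y(1) y4 mfun_bound[where a=a and KA=KA, OF A y]])
    have d2: "cmod (complex_of_real (b' k') - ?z - complex_of_real ((a' k')^2) * m1' y) \<ge> y/2"
      unfolding m1'_def by (rule den_bound[OF A' y(1) y4 mfun_bound[where a=a' and KA=KA, OF A' y]])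
    have "1 / (complex_of_real (b k) - ?z - complex_of_real ((a k)^2) * m1 y)
        = 1 / (complex_of_real (b' k') - ?z - complex_of_real ((a' k')^2) * m1' y)"
      using eq[OF that] mfun_rec[where a=a and KA=KA, OF A y, where b=b and k=k] mfun_rec[where a=a' and KA=KA, OF A' y, where b=b' and k=k'] unfolding m1_def m1'_def
      by simp
    then have "complex_of_real (b k) - ?z - complex_of_real ((a k)^2) * m1 y
        = complex_of_real (b' k') - ?z - complex_of_real ((a' k')^2) * m1' y"
      by simp
    then show ?thesis by (simp add: algebra_simps)
  qed
  have bb: "b k = b' k'"
  proof -
    have "b k - b' k' = 0"
    proof (rule small_zero[of Y _ "4*KA"])
      show "Y > 0" using Y by auto
      fix y assume "y \<ge> Y"
      have y: "y > 0" "8*KA \<le> y^2" using yy[OF \<open>y \<ge> Y\<close>] by auto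
      have "complex_of_real (b k - b' k') = complex_of_real ((a k)^2) * m1 y - complex_of_real ((a' k')^2) * m1' y"
        using DD[OF \<open>y \<ge> Y\<close>] by (simp add: algebra_simps)
      then have "\<bar>b k - b' k'\<bar> = cmod (complex_of_real ((a k)^2) * m1 y - complex_of_real ((a' k')^2) * m1' y)"
        by (metis norm_of_real)
      also have "\<dots> \<le> (a k)^2 * cmod (m1 y) + (a' k')^2 * cmod (m1' y)"
        by (rule order_trans[OF norm_triangle_ineq4]) (simp add: norm_mult del: of_real_power)
      also have "\<dots> \<le> KA * (2/y) + KA * (2/y)"
        unfolding m1_def m1'_def
        by (intro add_mono mult_mono A A' mfun_bound[where a=a and KA=KA, OF A y] mfun_bound[where a=a' and KA=KA, OF A' y]) (use A0 in auto)
      also have "\<dots> = 4*KA/y" by simp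
      finally show "\<bar>b k - b' k'\<bar> \<le> 4*KA/y" .
    qed
    thus ?thesis by simp
  qed
  have E: "complex_of_real ((a k)^2) * m1 y = complex_of_real ((a' k')^2) * m1' y" if "y \<ge> Y" for y
    using DD[OF that] bb by simp
  have aa2: "(a k)^2 = (a' k')^2"
  proof -
    have "(a k)^2 - (a' k')^2 = 0"
    proof (rule small_zero[of Y _ "KA * (2*KB + 4*KA) + KA * (2*KB + 4*KA)"])
      show "Y > 0" using Y by auto
      fix y assume "y \<ge> Y"
      have y: "y \<ge> 1" "8*KA \<le> y^2" using yy[OF \<open>y \<ge> Y\<close>] by auto
      let ?z = "\<i> * complex_of_real y"
      have n1: "cmod (m1 y * ?z + 1) \<le> (2*KB + 4*KA)/y" unfolding m1_def by (rule near_m1[where a=a and KA=KA and b=b, OF A B y])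
      have n2: "cmod (m1' y * ?z + 1) \<le> (2*KB + 4*KA)/y" unfolding m1'_def by (rule near_m1[where a=a' and KA=KA and b=b', OF A' B' y])
      have "complex_of_real ((a k)^2 - (a' k')^2) =
         complex_of_real ((a k)^2) * (m1 y * ?z + 1) - complex_of_real ((a' k')^2) * (m1' y * ?z + 1)"
        using E[OF \<open>y \<ge> Y\<close>] by (simp add: algebra_simps)
      then have "\<bar>(a k)^2 - (a' k')^2\<bar> = cmod (complex_of_real ((a k)^2) * (m1 y * ?z + 1) - complex_of_real ((a' k')^2) * (m1' y * ?z + 1))"
        by (metis norm_of_real)
      also have "\<dots> \<le> (a k)^2 * cmod (m1 y * ?z + 1) + (a' k')^2 * cmod (m1' y * ?z + 1)"
        by (rule order_trans[OF norm_triangle_ineq4]) (simp add: norm_mult del: of_real_power)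
      also have "\<dots> \<le> KA * ((2*KB + 4*KA)/y) + KA * ((2*KB + 4*KA)/y)"
        by (intro add_mono mult_mono A A' n1 n2) (use A0 in auto)
      also have "\<dots> = (KA * (2*KB + 4*KA) + KA * (2*KB + 4*KA))/y" by (simp add: field_simps)
      finally show "\<bar>(a k)^2 - (a' k')^2\<bar> \<le> (KA * (2*KB + 4*KA) + KA * (2*KB + 4*KA))/y" .
    qed
    thus ?thesis by simp
  qed
  have aa: "a k = a' k'" using aa2 P[of k] P'[of k'] by (simp add: power2_eq_iff)
  have "a k \<noteq> 0" using P[of k] by auto
  then have "\<forall>y\<ge>Y. m1 y = m1' y" using E aa by auto
  then show ?thesis using aa bb unfolding m1_def m1'_def by auto
qed

lemma uniq:
  assumes A: "\<And>j. (a j)^2 \<le> KA" and A': "\<And>j. (a' j)^2 \<le> KA"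
    and B: "\<And>j. \<bar>b j\<bar> \<le> KB" and B': "\<And>j. \<bar>b' j\<bar> \<le> KB"
    and P: "\<And>j. a j > 0" and P': "\<And>j. a' j > 0"
    and Y: "Y \<ge> 1" "8*KA \<le> Y^2"
    and eq: "\<And>y. y \<ge> Y \<Longrightarrow> mfun a b k (\<i> * complex_of_real y) = mfun a' b' k' (\<i> * complex_of_real y)"
  shows "a (k+j) = a' (k'+j) \<and> b (k+j) = b' (k'+j)"
proof -
  have "\<forall>y\<ge>Y. mfun a b (k+j) (\<i> * complex_of_real y) = mfun a' b' (k'+j) (\<i> * complex_of_real y)" for j
  proof (induction j)
    case 0 then show ?case using eq by simp
  next
    case (Suc j)
    show ?case using uniq_step[where a=a and a'=a' and b=b and b'=b' and KA=KA and KB=KB, OF A A' B B' P P' Y, where k="k+j" and k'="k'+j"] Suc.IH by simp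
  qed
  then show ?thesis using uniq_step[where a=a and a'=a' and b=b and b'=b' and KA=KA and KB=KB, OF A A' B B' P P' Y, where k="k+j" and k'="k'+j"] by simp
qed

lemma cf_shift: "cf_trunc a b n (k + s) z = cf_trunc (\<lambda>j. a (j+s)) (\<lambda>j. b (j+s)) n k z"
proof (induction n arbitrary: k)
  case (Suc n)
  show ?case using Suc.IH[of "Suc k"] by simp
qed simp

lemma mfun_shift: "mfun a b (k + s) z = mfun (\<lambda>j. a (j+s)) (\<lambda>j. b (j+s)) k z"
  unfolding mfun_def cf_shift ..


lemma palindrome_nth: "palindrome w \<longleftrightarrow> (\<forall>i<length w. w!(length w - Suc i) = w!i)"
  unfolding palindrome_def by (simp add: list_eq_iff_nth_eq rev_nth)

lemma word_len[simp]: "length (word f p) = p" by (simp add: word_def)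
lemma word_nth[simp]: "i < p \<Longrightarrow> word f p ! i = f (Suc i)" by (simp add: word_def nth_upt del: upt_Suc)

lemma pal_take:
  assumes "l \<le> p" shows "palindrome (take l (word f p)) \<longleftrightarrow> (\<forall>i<l. f (i+1) = f (l - i))"
proof -
  have e1: "take l (word f p) ! i = f (i+1)" if "i < l" for i using that assms by simp
  have e2: "take l (word f p) ! (l - Suc i) = f (l - i)" if "i < l" for i
    using that assms by (simp add: Suc_diff_Suc)
  show ?thesis unfolding palindrome_nth using assms e1 e2 by (auto simp: min_def)
qed

lemma pal_drop:
  assumes "l \<le> p" shows "palindrome (drop l (word f p)) \<longleftrightarrow> (\<forall>i<p-l. f (l+i+1) = f (p - i))"
proof -
  have e1: "drop l (word f p) ! i = f (l+i+1)" if "i < p - l" for i using that assms by simp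
  have e2: "drop l (word f p) ! (p - l - Suc i) = f (p - i)" if "i < p - l" for i
    using that assms by (simp add: Suc_diff_Suc)
  show ?thesis unfolding palindrome_nth using assms e1 e2 by auto
qed

lemma comb:
  fixes a b :: "nat \<Rightarrow> real"
  assumes p: "p \<ge> 3" and l: "1 \<le> l" "l + 2 \<le> p"
  shows "((\<forall>i<l. a (i+1) = a (l - i)) \<and> (\<forall>i<p-l. a (l+i+1) = a (p - i)) \<and>
          (\<forall>i<l+1. b (i+1) = b (l+1 - i)) \<and> (\<forall>i<p-(l+1). b (l+1+i+1) = b (p - i)))
     \<longleftrightarrow> (\<forall>i<p. (if i = p-1 then a p else a (p-1-i)) = a (if i+l+1 < p then i+l+2 else i+l+2-p)
                  \<and> b (p - i) = b (if i+l+1 < p then i+l+2 else i+l+2-p))"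
  (is "?L \<longleftrightarrow> ?R")
proof
  assume L: ?L
  then have PA1: "\<And>i. i<l \<Longrightarrow> a (i+1) = a (l - i)"
    and PA2: "\<And>i. i<p-l \<Longrightarrow> a (l+i+1) = a (p - i)"
    and PB1: "\<And>i. i<l+1 \<Longrightarrow> b (i+1) = b (l+1 - i)"
    and PB2: "\<And>i. i<p-(l+1) \<Longrightarrow> b (l+1+i+1) = b (p - i)" by auto
  show ?R
  proof (intro allI impI conjI)
    fix i assume i: "i < p"
    show "(if i = p-1 then a p else a (p-1-i)) = a (if i+l+1 < p then i+l+2 else i+l+2-p)"
    proof (cases "i = p-1")
      case True
      then show ?thesis using PA2[of 0] p l by (simp add: add.commute)
    next
      case F: False
      show ?thesis
      proof (cases "i+l+1 < p")
        case True
        have "a (l+(i+1)+1) = a (p-(i+1))" using PA2[of "i+1"] True by simp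
        moreover have "l+(i+1)+1 = i+l+2" "p-(i+1) = p-1-i" by arith+
        ultimately show ?thesis using F True by (simp add: add.commute)
      next
        case False
        have "a (p-2-i+1) = a (l-(p-2-i))" using PA1[of "p-2-i"] False F i by simp
        moreover have "p-2-i+1 = p-1-i" "l-(p-2-i) = i+l+2-p" using False F i l by arith+
        ultimately show ?thesis using F False by simp
      qed
    qed
    show "b (p - i) = b (if i+l+1 < p then i+l+2 else i+l+2-p)"
    proof (cases "i+l+1 < p")
      case True
      have "b (l+1+i+1) = b (p-i)" using PB2[of i] True by simp
      moreover have "l+1+i+1 = i+l+2" by arith
      ultimately show ?thesis using True by (simp add: add.commute)
    next
      case False
      have "b (p-1-i+1) = b (l+1-(p-1-i))" using PB1[of "p-1-i"] False i by simp
      moreover have "p-1-i+1 = p-i" "l+1-(p-1-i) = i+l+2-p" using False i l by arith+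
      ultimately show ?thesis using False by simp
    qed
  qed
next
  assume R: ?R
  then have CA: "\<And>i. i<p \<Longrightarrow> (if i = p-1 then a p else a (p-1-i)) = a (if i+l+1 < p then i+l+2 else i+l+2-p)"
    and CB: "\<And>i. i<p \<Longrightarrow> b (p - i) = b (if i+l+1 < p then i+l+2 else i+l+2-p)" by auto
  have PA1: "a (i+1) = a (l - i)" if "i < l" for i
  proof -
    have c0: "p-2-i < p" using p by arith
    have c1: "p-2-i \<noteq> p-1" using p by arith
    have c2: "\<not> (p-2-i+l+1 < p)" using that l by arith
    have h: "a (p-1-(p-2-i)) = a ((p-2-i)+l+2-p)" using CA[OF c0] unfolding if_not_P[OF c1] if_not_P[OF c2] .
    moreover have "p-1-(p-2-i) = i+1" "(p-2-i)+l+2-p = l-i" using that l by arith+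
    ultimately show ?thesis by simp
  qed
  have PA2: "a (l+i+1) = a (p - i)" if "i < p-l" for i
  proof (cases i)
    case 0
    then show ?thesis using CA[of "p-1"] p l by (simp add: add.commute)
  next
    case (Suc k)
    have c0: "k < p" "k \<noteq> p-1" "k+l+1 < p" using that Suc l by arith+
    have "a (p-1-k) = a (k+l+2)" using CA[OF c0(1)] unfolding if_not_P[OF c0(2)] if_P[OF c0(3)] .
    moreover have "p-1-k = p-i" "k+l+2 = l+i+1" using Suc that by arith+
    ultimately show ?thesis by metis
  qed
  have PB1: "b (i+1) = b (l+1 - i)" if "i < l+1" for i
  proof -
    have c0: "p-1-i < p" "\<not> (p-1-i+l+1 < p)" using that l p by arith+
    have "b (p-(p-1-i)) = b ((p-1-i)+l+2-p)" using CB[OF c0(1)] unfolding if_not_P[OF c0(2)] .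
    moreover have "p-(p-1-i) = i+1" "(p-1-i)+l+2-p = l+1-i" using that l by arith+
    ultimately show ?thesis by simp
  qed
  have PB2: "b (l+1+i+1) = b (p - i)" if "i < p-(l+1)" for i
  proof -
    have c0: "i < p" "i+l+1 < p" using that by arith+
    have "b (p-i) = b (i+l+2)" using CB[OF c0(1)] unfolding if_P[OF c0(2)] .
    moreover have "i+l+2 = l+1+i+1" by arith
    ultimately show ?thesis by (metis add.commute)
  qed
  show ?L using PA1 PA2 PB1 PB2 by blast
qed


lemma per_shift: assumes "periodic_seq f p" "j \<ge> 1" shows "f (j + q*p) = f j"
proof (induction q)
  case (Suc q)
  have "f (j + Suc q * p) = f ((j + q*p) + p)" by (simp add: algebra_simps)
  also have "\<dots> = f (j + q*p)" using assms unfolding periodic_seq_def by auto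
  finally show ?case using Suc.IH by simp
qed simp

lemma per_mod: assumes "periodic_seq f p" "p > 0" "x \<ge> 1" shows "f x = f ((x-1) mod p + 1)"
proof -
  have e: "((x-1) mod p + 1) + ((x-1) div p)*p = x"
  proof -
    have "(x-1) mod p + (x-1) div p * p = x - 1" by (rule mod_div_mult_eq)
    then show ?thesis using assms(3) by linarith
  qed
  have "f (((x-1) mod p + 1) + ((x-1) div p)*p) = f ((x-1) mod p + 1)"
    by (rule per_shift[OF assms(1)]) simp
  then show ?thesis unfolding e .
qed

lemma mod_X: fixes i p l :: nat assumes "i < p" "l + 2 \<le> p"
  shows "(i+l+1) mod p + 1 = (if i+l+1 < p then i+l+2 else i+l+2-p)"
proof (cases "i+l+1 < p")
  case True then show ?thesis by simp
next
  case False
  then have "(i+l+1) mod p = i+l+1-p" using assms by (simp add: le_mod_geq)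
  then show ?thesis using False by simp
qed

theorem mainTheorem4:
  fixes a b :: "nat \<Rightarrow> real" and p l :: nat
  assumes "p \<ge> 3"
    and "periodic_seq a p" and "periodic_seq b p"
    and "\<forall>j\<ge>1. a j > 0"
    and "1 \<le> l" and "l \<le> p - 2"
  shows "doubly_palindromic a b p l \<longleftrightarrow>
    (\<forall>z. Im z > 0 \<longrightarrow> mfun (refl_a a p) (refl_b b p) 1 z = mfun a b (l + 2) z)"
proof -
  note p = assms(1) and pa = assms(2) and pb = assms(3) and pos = assms(4)
  have l2: "l + 2 \<le> p" using assms(1,6) by arith
  have p0: "p > 0" using p by arith
  define a1 where "a1 j = a (j + (l+2))" for j
  define b1 where "b1 j = b (j + (l+2))" for j
  define a2 where "a2 j = refl_a a p (j+1)" for j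
  define b2 where "b2 j = refl_b b p (j+1)" for j
  define X where "X i = (if i+l+1 < p then i+l+2 else i+l+2-p)" for i
  have X1: "X i \<in> {1..p}" if "i < p" for i using that l2 unfolding X_def by auto
  have a1X: "a1 j = a (X (j mod p))" for j
  proof -
    have "a1 j = a ((j + (l+2) - 1) mod p + 1)" unfolding a1_def using per_mod[OF pa p0, of "j+(l+2)"] by simp
    also have "(j + (l+2) - 1) mod p = (j + (l+1)) mod p" by simp
    also have "\<dots> = (j mod p + (l+1)) mod p" by (rule mod_add_left_eq[symmetric])
    also have "\<dots> + 1 = X (j mod p)" unfolding X_def using mod_X[of "j mod p" p l] p0 l2 by (simp add: add.assoc)
    finally show ?thesis .
  qed
  have b1X: "b1 j = b (X (j mod p))" for j
  proof -
    have "b1 j = b ((j + (l+2) - 1) mod p + 1)" unfolding b1_def using per_mod[OF pb p0, of "j+(l+2)"] by simp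
    also have "(j + (l+2) - 1) mod p = (j + (l+1)) mod p" by simp
    also have "\<dots> = (j mod p + (l+1)) mod p" by (rule mod_add_left_eq[symmetric])
    also have "\<dots> + 1 = X (j mod p)" unfolding X_def using mod_X[of "j mod p" p l] p0 l2 by (simp add: add.assoc)
    finally show ?thesis .
  qed
  define RA where "RA i = (if i = p-1 then p else p-1-i)" for i
  have RA1: "RA i \<in> {1..p}" if "i < p" for i using that p unfolding RA_def by auto
  have a2R: "a2 j = a (RA (j mod p))" for j unfolding a2_def refl_a_def RA_def Let_def by (auto split: if_splits)
  have b2R: "b2 j = b (p - j mod p)" for j unfolding b2_def refl_b_def by simp
  have RB1: "p - i \<in> {1..p}" if "i < p" for i using that by auto
  have coef: "(\<forall>j. a2 j = a1 j \<and> b2 j = b1 j) \<longleftrightarrow>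
     (\<forall>i<p. (if i = p-1 then a p else a (p-1-i)) = a (if i+l+1 < p then i+l+2 else i+l+2-p)
                  \<and> b (p - i) = b (if i+l+1 < p then i+l+2 else i+l+2-p))"
  proof
    assume H: "\<forall>j. a2 j = a1 j \<and> b2 j = b1 j"
    show "\<forall>i<p. (if i = p-1 then a p else a (p-1-i)) = a (if i+l+1 < p then i+l+2 else i+l+2-p)
                  \<and> b (p - i) = b (if i+l+1 < p then i+l+2 else i+l+2-p)"
    proof (intro allI impI)
      fix i assume i: "i < p"
      have "i mod p = i" using i by simp
      then show "(if i = p-1 then a p else a (p-1-i)) = a (if i+l+1 < p then i+l+2 else i+l+2-p)
                  \<and> b (p - i) = b (if i+l+1 < p then i+l+2 else i+l+2-p)"
        using H[rule_format, of i] a1X[of i] b1X[of i] a2R[of i] b2R[of i]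
        unfolding X_def RA_def by (simp split: if_splits)
    qed
  next
    assume H: "\<forall>i<p. (if i = p-1 then a p else a (p-1-i)) = a (if i+l+1 < p then i+l+2 else i+l+2-p)
                  \<and> b (p - i) = b (if i+l+1 < p then i+l+2 else i+l+2-p)"
    show "\<forall>j. a2 j = a1 j \<and> b2 j = b1 j"
    proof
      fix j
      have "j mod p < p" using p0 by simp
      from H[rule_format, OF this] show "a2 j = a1 j \<and> b2 j = b1 j"
        unfolding a1X b1X a2R b2R X_def RA_def by (simp split: if_splits)
    qed
  qed
  have dp: "doubly_palindromic a b p l \<longleftrightarrow> (\<forall>j. a2 j = a1 j \<and> b2 j = b1 j)"
  proof -
    have "doubly_palindromic a b p l \<longleftrightarrow>
          ((\<forall>i<l. a (i+1) = a (l - i)) \<and> (\<forall>i<p-l. a (l+i+1) = a (p - i)) \<and>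
          (\<forall>i<l+1. b (i+1) = b (l+1 - i)) \<and> (\<forall>i<p-(l+1). b (l+1+i+1) = b (p - i)))"
      unfolding doubly_palindromic_def
      using pal_take[of l p a] pal_drop[of l p a] pal_take[of "l+1" p b] pal_drop[of "l+1" p b]
        pa pb assms(5) l2 by auto
    also have "\<dots> \<longleftrightarrow> (\<forall>i<p. (if i = p-1 then a p else a (p-1-i)) = a (if i+l+1 < p then i+l+2 else i+l+2-p)
                  \<and> b (p - i) = b (if i+l+1 < p then i+l+2 else i+l+2-p))"
      by (rule comb[OF p assms(5) l2])
    finally show ?thesis using coef by simp
  qed
  have M: "mfun (refl_a a p) (refl_b b p) 1 z = mfun a2 b2 0 z \<and> mfun a b (l + 2) z = mfun a1 b1 0 z" for z
    using mfun_shift[of "refl_a a p" "refl_b b p" 0 1 z] mfun_shift[of a b 0 "l+2" z]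
    unfolding a1_def b1_def a2_def b2_def by simp
  show ?thesis
  proof
    assume "doubly_palindromic a b p l"
    then have "a2 = a1" "b2 = b1" using dp by auto
    then show "\<forall>z. Im z > 0 \<longrightarrow> mfun (refl_a a p) (refl_b b p) 1 z = mfun a b (l + 2) z"
      using M by simp
  next
    assume H: "\<forall>z. Im z > 0 \<longrightarrow> mfun (refl_a a p) (refl_b b p) 1 z = mfun a b (l + 2) z"
    define KA where "KA = (\<Sum>i\<in>{1..p}. (a i)^2)"
    define KB where "KB = (\<Sum>i\<in>{1..p}. \<bar>b i\<bar>)"
    have KAx: "(a x)^2 \<le> KA" if "x \<in> {1..p}" for x
      unfolding KA_def by (rule member_le_sum) (use that in auto)
    have KBx: "\<bar>b x\<bar> \<le> KB" if "x \<in> {1..p}" for x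
      unfolding KB_def by (rule member_le_sum) (use that in auto)
    have Px: "a x > 0" if "x \<in> {1..p}" for x using pos that by auto
    have mp: "j mod p < p" for j using p0 by simp
    have A1: "\<And>j. (a1 j)^2 \<le> KA" unfolding a1X by (rule KAx[OF X1[OF mp]])
    have A2: "\<And>j. (a2 j)^2 \<le> KA" unfolding a2R by (rule KAx[OF RA1[OF mp]])
    have B1: "\<And>j. \<bar>b1 j\<bar> \<le> KB" unfolding b1X by (rule KBx[OF X1[OF mp]])
    have B2: "\<And>j. \<bar>b2 j\<bar> \<le> KB" unfolding b2R by (rule KBx[OF RB1[OF mp]])
    have P1: "\<And>j. a1 j > 0" unfolding a1X by (rule Px[OF X1[OF mp]])
    have P2: "\<And>j. a2 j > 0" unfolding a2R by (rule Px[OF RA1[OF mp]])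
    define Y where "Y = 1 + 8*KA"
    have KA0: "KA \<ge> 0" using A1[of 0] by (smt (verit) zero_le_power2)
    have Y: "Y \<ge> 1" "8*KA \<le> Y^2"
    proof -
      show "Y \<ge> 1" unfolding Y_def using KA0 by simp
      have "1 * (1+8*KA) \<le> (1+8*KA) * (1+8*KA)" by (rule mult_right_mono) (use KA0 in auto)
      then show "8*KA \<le> Y^2" unfolding Y_def by (simp add: power2_eq_square)
    qed
    have eq: "mfun a2 b2 0 (\<i> * complex_of_real y) = mfun a1 b1 0 (\<i> * complex_of_real y)" if "y \<ge> Y" for y
    proof -
      have "Im (\<i> * complex_of_real y) > 0" using that Y by simp
      then show ?thesis using H M by auto
    qed
    have "a2 (0+j) = a1 (0+j) \<and> b2 (0+j) = b1 (0+j)" for j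
      by (rule uniq[where a=a2 and a'=a1 and b=b2 and b'=b1 and KA=KA and KB=KB, OF A2 A1 B2 B1 P2 P1 Y eq])
    then show "doubly_palindromic a b p l" using dp by simp
  qed
qed

end
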